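(* Let $1\le r\le K\le d$ and let $\bm{A}=\begin{bmatrix}\widetilde{\bm{A}}&\bm{0}\\\bm{0}&\bm{0}\end{bmatrix}\in\mathbb{R}^{d\times K}$ with $\widetilde{\bm{A}}=\operatorname{diag}(a_1,\ldots,a_r)$, $a_1\ge\cdots\ge a_r>0$. Let $R(\bm{Q})=\bm{A}-\bm{Q}\bm{A}^T\bm{Q}$. For $\bm{Q}\in{\rm St}(d,K)$ partitioned as $\bm{Q}=\begin{bmatrix}\bm{Q}_1&\bm{Q}_2\\\bm{Q}_3&\bm{Q}_4\end{bmatrix}$ with $\bm{Q}_1\in\mathbb{R}^{r\times r}$, $\bm{Q}_2\in\mathbb{R}^{r\times(K-r)}$, $\bm{Q}_3\in\mathbb{R}^{(d-r)\times r}$, $\bm{Q}_4\in\mathbb{R}^{(d-r)\times(K-r)}$, we have $$a_r^2\|\bm{Q}_2\|_F^2\le\|R(\bm{Q})\|_F^2,\qquad a_r^2\|\bm{Q}_3\|_F^2\le\|R(\bm{Q})\|_F^2,\qquad\min_{\bm{V}\in{\rm St}(d-r,K-r)}\|\bm{Q}_4-\bm{V}\|_F^2\le\|\bm{Q}_2\|_F^2.$$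
   Context: ${\rm St}(m,k)=\{\bm{V}\in\mathbb{R}^{m\times k}:\bm{V}^T\bm{V}=\bm{I}_k\}$. *)

theory Defs
  imports Complex_Main "Jordan_Normal_Form.Matrix"
begin

definition fro_norm :: "real mat \<Rightarrow> real" where
  "fro_norm M = sqrt (\<Sum>i<dim_row M. \<Sum>j<dim_col M. (M $$ (i,j))\<^sup>2)"

definition stiefel :: "nat \<Rightarrow> nat \<Rightarrow> real mat set" where
  "stiefel m k = {V \<in> carrier_mat m k. transpose_mat V * V = 1\<^sub>m k}"

definition resid :: "real mat \<Rightarrow> real mat \<Rightarrow> real mat" where
  "resid A Q = A - Q * transpose_mat A * Q"

end

theory Submission
  imports Defs "Jordan_Normal_Form.Char_Poly" "HOL-Computational_Algebra.Fundamental_Theorem_Algebra"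
begin
definition ip :: "nat \<Rightarrow> (nat \<Rightarrow> real) \<Rightarrow> (nat \<Rightarrow> real) \<Rightarrow> real" where
  "ip n x y = (\<Sum>l<n. x l * y l)"

definition orthon :: "nat \<Rightarrow> nat set \<Rightarrow> (nat \<Rightarrow> nat \<Rightarrow> real) \<Rightarrow> bool" where
  "orthon n J f \<longleftrightarrow> (\<forall>i\<in>J. \<forall>j\<in>J. ip n (f i) (f j) = (if i = j then 1 else 0))"

lemma ip_comm: "ip n x y = ip n y x"
  unfolding ip_def by (simp add: mult.commute)

lemma ip_nonneg: "ip n x x \<ge> 0"
  unfolding ip_def by (intro sum_nonneg) auto

lemma ip_sum_left: "ip n (\<lambda>l. \<Sum>a\<in>A. c a * f a l) y = (\<Sum>a\<in>A. c a * ip n (f a) y)"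
proof -
  have "ip n (\<lambda>l. \<Sum>a\<in>A. c a * f a l) y = (\<Sum>l<n. \<Sum>a\<in>A. c a * (f a l * y l))"
    unfolding ip_def by (simp add: sum_distrib_right mult.assoc)
  also have "\<dots> = (\<Sum>a\<in>A. \<Sum>l<n. c a * (f a l * y l))" by (rule sum.swap)
  also have "\<dots> = (\<Sum>a\<in>A. c a * ip n (f a) y)"
    unfolding ip_def by (simp add: sum_distrib_left)
  finally show ?thesis .
qed

lemma ip_sum_right: "ip n y (\<lambda>l. \<Sum>a\<in>A. c a * f a l) = (\<Sum>a\<in>A. c a * ip n y (f a))"
  using ip_sum_left[of n c f A y] by (simp add: ip_comm)

lemma ip_add_left: "ip n (\<lambda>l. x l + z l) y = ip n x y + ip n z y"
  unfolding ip_def by (simp add: distrib_right sum.distrib)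

lemma ip_diff_left: "ip n (\<lambda>l. x l - z l) y = ip n x y - ip n z y"
  unfolding ip_def by (simp add: left_diff_distrib sum_subtractf)

lemma ip_add_right: "ip n y (\<lambda>l. x l + z l) = ip n y x + ip n y z"
  unfolding ip_def by (simp add: distrib_left sum.distrib)

lemma ip_diff_right: "ip n y (\<lambda>l. x l - z l) = ip n y x - ip n y z"
  unfolding ip_def by (simp add: right_diff_distrib sum_subtractf)

lemma ip_scale_left: "ip n (\<lambda>l. c * x l) y = c * ip n x y"
  unfolding ip_def by (simp add: sum_distrib_left mult.assoc)

lemma ip_scale_right: "ip n y (\<lambda>l. c * x l) = c * ip n y x"
  unfolding ip_def by (simp add: sum_distrib_left mult.left_commute)

lemma ip_delta: "k < n \<Longrightarrow> ip n (\<lambda>l. if l = k then 1 else 0) y = y k"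
  unfolding ip_def by (subst sum.cong[OF refl, of _ _ "\<lambda>l. if l = k then y k else 0"]) auto

lemma orthon_sum:
  assumes "orthon n J f" "finite J" "a \<in> J"
  shows "(\<Sum>b\<in>J. c b * ip n (f b) (f a)) = c a"
proof -
  have "(\<Sum>b\<in>J. c b * ip n (f b) (f a)) = (\<Sum>b\<in>J. if b = a then c a else 0)"
    using assms(1,3) unfolding orthon_def by (intro sum.cong) auto
  also have "\<dots> = c a" using assms(2,3) by simp
  finally show ?thesis .
qed

lemma orthon_sum2:
  assumes "orthon n J f" "finite J" "a \<in> J"
  shows "(\<Sum>b\<in>J. c b * ip n (f a) (f b)) = c a"
proof -
  have "(\<Sum>b\<in>J. c b * ip n (f a) (f b)) = (\<Sum>b\<in>J. c b * ip n (f b) (f a))"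
    by (intro sum.cong refl) (metis ip_comm)
  then show ?thesis using orthon_sum[OF assms, of c] by simp
qed

lemma ip_delta_right: "k < n \<Longrightarrow> ip n y (\<lambda>l. if l = k then 1 else 0) = y k"
  using ip_delta[of k n y] by (simp add: ip_comm)

lemma complete1:
  assumes fin: "finite J" and orth: "orthon n J f" and card: "card J < n"
  shows "\<exists>w. ip n w w = 1 \<and> (\<forall>j\<in>J. ip n w (f j) = 0)"
proof -
  define P where "P k = (\<lambda>l. (if l = k then 1 else 0) - (\<Sum>j\<in>J. f j k * f j l))" for k
  have ipP: "ip n (P k) (f i) = 0" if "k < n" "i \<in> J" for k i
  proof -
    have "ip n (P k) (f i) = f i k - (\<Sum>j\<in>J. f j k * ip n (f j) (f i))"
      unfolding P_def by (simp add: ip_diff_left ip_sum_left ip_delta that)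
    also have "\<dots> = 0" using orthon_sum[OF orth fin that(2), of "\<lambda>j. f j k"] by simp
    finally show ?thesis .
  qed
  have ipPP: "ip n (P k) (P k) = P k k" if "k < n" for k
  proof -
    have "ip n (P k) (P k) = ip n (P k) (\<lambda>l. (if l = k then 1 else 0)) - (\<Sum>j\<in>J. f j k * ip n (P k) (f j))"
      by (subst (2) P_def) (simp add: ip_diff_right ip_sum_right)
    also have "\<dots> = P k k" using ipP[OF that] by (simp add: ip_delta_right that)
    finally show ?thesis .
  qed
  have "(\<Sum>k<n. P k k) = (\<Sum>k<n. 1 - (\<Sum>j\<in>J. f j k * f j k))"
    unfolding P_def by simp
  also have "\<dots> = n - (\<Sum>j\<in>J. ip n (f j) (f j))"
    by (simp add: sum_subtractf ip_def sum.swap[of _ J])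
  also have "\<dots> = real n - real (card J)"
    using orth unfolding orthon_def by simp
  finally have sP: "(\<Sum>k<n. P k k) = real n - real (card J)" .
  have "\<exists>k<n. P k k > 0"
  proof (rule ccontr)
    assume "\<not> ?thesis"
    then have "(\<Sum>k<n. P k k) \<le> 0" by (intro sum_nonpos) auto
    with sP card show False by simp
  qed
  then obtain k where k: "k < n" "P k k > 0" by blast
  define w where "w = (\<lambda>l. (1 / sqrt (P k k)) * P k l)"
  have "ip n w w = 1"
    unfolding w_def ip_scale_left ip_scale_right ipPP[OF k(1)] using k(2)
    by (simp add: field_simps)
  moreover have "\<forall>j\<in>J. ip n w (f j) = 0"
    unfolding w_def ip_scale_left using ipP[OF k(1)] by simp
  ultimately show ?thesis by blast
qed

lemma extend_aux:
  "\<forall>J f. finite J \<longrightarrow> J \<subseteq> {..<m} \<longrightarrow> card ({..<m} - J) = N \<longrightarrow> m \<le> n \<longrightarrow> orthon n J f \<longrightarrow>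
     (\<exists>g. orthon n {..<m} g \<and> (\<forall>j\<in>J. g j = f j))"
proof (induction N)
  case 0
  show ?case
  proof (intro allI impI)
    fix J f assume fin: "finite J" and sub: "J \<subseteq> {..<m}" and c: "card ({..<m} - J) = 0"
      and orth: "orthon n J f"
    have "{..<m} - J = {}" using c by simp
    then have "J = {..<m}" using sub by blast
    then show "\<exists>g. orthon n {..<m} g \<and> (\<forall>j\<in>J. g j = f j)" using orth by blast
  qed
next
  case (Suc N)
  show ?case
  proof (intro allI impI)
    fix J f assume fin: "finite J" and sub: "J \<subseteq> {..<m}" and c: "card ({..<m} - J) = Suc N"
      and mn: "m \<le> n" and orth: "orthon n J f"
    obtain i where i: "i \<in> {..<m} - J" using c by (metis card.empty empty_iff nat.distinct(1) ex_in_conv)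
    have "card J < m"
    proof -
      have "J \<subset> {..<m}" using sub i by auto
      then show ?thesis using psubset_card_mono[of "{..<m}" J] by simp
    qed
    then obtain w where w: "ip n w w = 1" "\<forall>j\<in>J. ip n w (f j) = 0"
      using complete1[OF fin orth] mn by force
    define f' where "f' = f(i := w)"
    have orth': "orthon n (insert i J) f'"
      using orth w i unfolding orthon_def f'_def by (auto simp: ip_comm)
    have c': "card ({..<m} - insert i J) = N"
      using c i by (metis Diff_insert card_Diff_singleton diff_Suc_1 finite_Diff finite_lessThan)
    from Suc.IH[rule_format, OF _ _ c' mn orth'] fin sub i
    obtain g where "orthon n {..<m} g" "\<forall>j\<in>insert i J. g j = f' j" by auto
    then show "\<exists>g. orthon n {..<m} g \<and> (\<forall>j\<in>J. g j = f j)"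
      using i unfolding f'_def by (intro exI[of _ g]) auto
  qed
qed

lemma extend:
  assumes "finite J" "J \<subseteq> {..<m}" "m \<le> n" "orthon n J f"
  shows "\<exists>g. orthon n {..<m} g \<and> (\<forall>j\<in>J. g j = f j)"
  using extend_aux assms by blast

lemma complete_sq:
  assumes orth: "orthon m {..<m} u" and l: "l < m" "l' < m"
  shows "(\<Sum>a<m. u a l * u a l') = (if l = l' then 1 else 0)"
proof -
  define U where "U = mat m m (\<lambda>(l,a). u a l)"
  have U: "U \<in> carrier_mat m m" unfolding U_def by simp
  have "transpose_mat U * U = 1\<^sub>m m"
  proof (rule eq_matI)
    fix a b assume ab: "a < dim_row (1\<^sub>m m)" "b < dim_col (1\<^sub>m m)"
    have "(transpose_mat U * U) $$ (a, b) = (\<Sum>i<m. u a i * u b i)"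
      using ab U unfolding U_def by (simp add: scalar_prod_def lessThan_atLeast0)
    also have "\<dots> = 1\<^sub>m m $$ (a, b)" using orth ab unfolding orthon_def ip_def by auto
    finally show "(transpose_mat U * U) $$ (a, b) = 1\<^sub>m m $$ (a, b)" .
  qed (use U in auto)
  then have UU: "U * transpose_mat U = 1\<^sub>m m"
    using mat_mult_left_right_inverse[of "transpose_mat U" m U] U by auto
  have "(U * transpose_mat U) $$ (l, l') = (\<Sum>a<m. u a l * u a l')"
    using l U unfolding U_def by (simp add: scalar_prod_def lessThan_atLeast0)
  then show ?thesis using UU l by simp
qed

lemma expand:
  assumes orth: "orthon m {..<m} u" and l: "l < m"
  shows "(\<Sum>a<m. ip m (u a) y * u a l) = y l"
proof -
  have "(\<Sum>a<m. ip m (u a) y * u a l) = (\<Sum>a<m. \<Sum>l'<m. u a l' * y l' * u a l)"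
    unfolding ip_def by (simp add: sum_distrib_right)
  also have "\<dots> = (\<Sum>l'<m. y l' * (\<Sum>a<m. u a l * u a l'))"
    by (subst sum.swap) (simp add: sum_distrib_left mult_ac)
  also have "\<dots> = (\<Sum>l'<m. if l' = l then y l else 0)"
    using complete_sq[OF orth l] by (intro sum.cong) auto
  also have "\<dots> = y l" using l by simp
  finally show ?thesis .
qed

lemma parseval:
  assumes orth: "orthon m {..<m} u"
  shows "(\<Sum>a<m. (ip m (u a) y)\<^sup>2) = ip m y y"
proof -
  have "(\<Sum>a<m. (ip m (u a) y)\<^sup>2) = (\<Sum>a<m. ip m (u a) y * (\<Sum>l<m. u a l * y l))"
    unfolding power2_eq_square ip_def by simp
  also have "\<dots> = (\<Sum>a<m. \<Sum>l<m. ip m (u a) y * u a l * y l)"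
    by (simp add: sum_distrib_left mult.assoc)
  also have "\<dots> = (\<Sum>l<m. \<Sum>a<m. ip m (u a) y * u a l * y l)"
    by (rule sum.swap)
  also have "\<dots> = (\<Sum>l<m. (\<Sum>a<m. ip m (u a) y * u a l) * y l)"
    by (simp add: sum_distrib_right)
  also have "\<dots> = (\<Sum>l<m. y l * y l)" using expand[OF orth] by simp
  finally show ?thesis unfolding ip_def .
qed

lemma pyth:
  fixes x c :: "nat \<Rightarrow> real"
  assumes orth: "orthon d {..<K} q"
  defines "y \<equiv> (\<lambda>l. x l + (\<Sum>j<K. c j * q j l))"
  shows "ip d y y = (\<Sum>j<K. (ip d (q j) y)\<^sup>2) + ip d x x - (\<Sum>j<K. (ip d (q j) x)\<^sup>2)"
proof -
  have qy: "ip d (q j) y = ip d (q j) x + c j" if "j < K" for j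
  proof -
    have "ip d (q j) y = ip d (q j) x + (\<Sum>i<K. c i * ip d (q j) (q i))"
      unfolding y_def by (simp add: ip_add_right ip_sum_right)
    then show ?thesis using orthon_sum2[OF orth _, of j c] that by simp
  qed
  have h2: "(\<Sum>j<K. c j * (\<Sum>i<K. c i * ip d (q j) (q i))) = (\<Sum>j<K. c j * c j)"
    by (intro sum.cong refl) (simp add: orthon_sum2[OF orth])
  have h1: "(\<Sum>j<K. c j * ip d x (q j)) = (\<Sum>j<K. c j * ip d (q j) x)"
    by (intro sum.cong refl) (metis ip_comm)
  have "ip d y y = ip d x x + 2 * (\<Sum>j<K. c j * ip d (q j) x) + (\<Sum>j<K. c j * c j)"
    unfolding y_def ip_add_left ip_add_right ip_sum_left ip_sum_right h1 h2
    by simp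
  moreover have "(\<Sum>j<K. (ip d (q j) y)\<^sup>2) = (\<Sum>j<K. (ip d (q j) x)\<^sup>2) + 2 * (\<Sum>j<K. c j * ip d (q j) x) + (\<Sum>j<K. c j * c j)"
  proof -
    have "(\<Sum>j<K. (ip d (q j) y)\<^sup>2) = (\<Sum>j<K. (ip d (q j) x)\<^sup>2 + 2 * (c j * ip d (q j) x) + c j * c j)"
      by (intro sum.cong refl) (simp add: qy power2_eq_square algebra_simps)
    then show ?thesis by (simp add: sum.distrib sum_distrib_left)
  qed
  ultimately show ?thesis by simp
qed

lemma bessel:
  assumes orth: "orthon d {..<K} q"
  shows "(\<Sum>j<K. (ip d (q j) x)\<^sup>2) \<le> ip d x x"
proof -
  define z where "z = (\<lambda>l. x l - (\<Sum>j<K. ip d (q j) x * q j l))"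
  have x: "x = (\<lambda>l. z l + (\<Sum>j<K. ip d (q j) x * q j l))" unfolding z_def by simp
  have qz: "ip d (q j) z = 0" if "j < K" for j
  proof -
    have "ip d (q j) z = ip d (q j) x - (\<Sum>i<K. ip d (q i) x * ip d (q j) (q i))"
      unfolding z_def by (simp add: ip_diff_right ip_sum_right)
    then show ?thesis using orthon_sum2[OF orth _, of j] that by simp
  qed
  have "ip d x x = (\<Sum>j<K. (ip d (q j) x)\<^sup>2) + ip d z z - (\<Sum>j<K. (ip d (q j) z)\<^sup>2)"
    by (subst (1 2 3) x) (rule pyth[OF orth])
  also have "\<dots> = (\<Sum>j<K. (ip d (q j) x)\<^sup>2) + ip d z z" using qz by simp
  finally show ?thesis using ip_nonneg[of d z] by simp
qed

lemma sym_eigen_vec: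
  fixes T :: "real mat"
  assumes T: "T \<in> carrier_mat p p" and p: "0 < p"
    and sym: "\<And>i j. i < p \<Longrightarrow> j < p \<Longrightarrow> T $$ (i,j) = T $$ (j,i)"
  shows "\<exists>\<mu> w. w \<in> carrier_vec p \<and> w \<noteq> 0\<^sub>v p \<and> T *\<^sub>v w = \<mu> \<cdot>\<^sub>v w"
proof -
  define Tc where "Tc = map_mat complex_of_real T"
  have Tc: "Tc \<in> carrier_mat p p" using T unfolding Tc_def by simp
  have cp: "char_poly Tc = map_poly of_real (char_poly T)"
    unfolding Tc_def by (rule of_real_hom.char_poly_hom[OF T])
  have deg: "degree (char_poly Tc) = p" using degree_monic_char_poly[OF Tc] by simp
  have "\<exists>z. poly (char_poly Tc) z = 0"
    by (rule fundamental_theorem_of_algebra_alt) (use deg p in auto)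
  then obtain lam where lam: "poly (char_poly Tc) lam = 0" by blast
  then have "eigenvalue Tc lam" using eigenvalue_root_char_poly[OF Tc] by simp
  then obtain v where v: "v \<in> carrier_vec p" "v \<noteq> 0\<^sub>v p" "Tc *\<^sub>v v = lam \<cdot>\<^sub>v v"
    unfolding eigenvalue_def eigenvector_def using Tc by auto
  have Tv: "(\<Sum>j<p. complex_of_real (T $$ (i,j)) * v $ j) = lam * v $ i" if "i < p" for i
  proof -
    have "(Tc *\<^sub>v v) $ i = (\<Sum>j<p. complex_of_real (T $$ (i,j)) * v $ j)"
      using that Tc T v(1) unfolding Tc_def by (simp add: scalar_prod_def lessThan_atLeast0)
    then show ?thesis using v(3) that v(1) by simp
  qed
  define s where "s = (\<Sum>i<p. \<Sum>j<p. complex_of_real (T $$ (i,j)) * (cnj (v $ i) * v $ j))"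
  define N where "N = (\<Sum>i<p. cnj (v $ i) * v $ i)"
  have sN: "s = lam * N"
  proof -
    have "s = (\<Sum>i<p. cnj (v $ i) * (\<Sum>j<p. complex_of_real (T $$ (i,j)) * v $ j))"
      unfolding s_def by (simp add: sum_distrib_left mult_ac)
    also have "\<dots> = (\<Sum>i<p. cnj (v $ i) * (lam * v $ i))" using Tv by simp
    finally show ?thesis unfolding N_def by (simp add: sum_distrib_left mult_ac)
  qed
  have "cnj s = (\<Sum>i<p. \<Sum>j<p. complex_of_real (T $$ (i,j)) * (v $ i * cnj (v $ j)))"
    unfolding s_def by (simp add: cnj_sum)
  also have "\<dots> = (\<Sum>j<p. \<Sum>i<p. complex_of_real (T $$ (i,j)) * (v $ i * cnj (v $ j)))"
    by (rule sum.swap)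
  also have "\<dots> = s" unfolding s_def
    by (intro sum.cong refl) (simp add: sym mult_ac)
  finally have "Im s = 0" by (metis cnj.simps(2) neg_equal_zero)
  have NIm: "Im N = 0" and NRe0: "Re N = (\<Sum>i<p. Re (v $ i) * Re (v $ i) + Im (v $ i) * Im (v $ i))"
    unfolding N_def by (simp_all add: Im_sum Re_sum complex_mult_cnj)
  have NRe: "Re N = (\<Sum>i<p. (cmod (v $ i))\<^sup>2)"
    unfolding NRe0 by (intro sum.cong refl) (metis cmod_power2 power2_eq_square)
  obtain i where i: "i < p" "v $ i \<noteq> 0" using v(1,2) by (metis carrier_vecD eq_vecI index_zero_vec)
  have "Re N > 0"
  proof -
    have "(\<Sum>i<p. (cmod (v $ i))\<^sup>2) \<ge> (cmod (v $ i))\<^sup>2"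
      using i by (intro member_le_sum) auto
    moreover have "(cmod (v $ i))\<^sup>2 > 0" using i by simp
    ultimately show ?thesis using NRe by linarith
  qed
  have "Im lam = 0"
  proof -
    have "0 = Im (lam * N)" using \<open>Im s = 0\<close> sN by simp
    also have "\<dots> = Im lam * Re N" using NIm by simp
    finally show ?thesis using \<open>Re N > 0\<close> by simp
  qed
  then have "lam = complex_of_real (Re lam)" by (simp add: complex_eq_iff)
  then have "complex_of_real (poly (char_poly T) (Re lam)) = 0"
    using lam unfolding cp of_real_hom.poly_map_poly[symmetric] by metis
  then have "poly (char_poly T) (Re lam) = 0" by simp
  then have "eigenvalue T (Re lam)" using eigenvalue_root_char_poly[OF T] by simp
  then show ?thesis unfolding eigenvalue_def eigenvector_def using T by auto
qed

lemma sym_eigen: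
  assumes p: "0 < p" and sym: "\<And>i j. i < p \<Longrightarrow> j < p \<Longrightarrow> t i j = t j i"
  shows "\<exists>\<mu> z. ip p z z = 1 \<and> (\<forall>l<p. (\<Sum>j<p. t l j * z j) = \<mu> * z l)"
proof -
  define T where "T = mat p p (\<lambda>(i,j). t i j)"
  have T: "T \<in> carrier_mat p p" unfolding T_def by simp
  obtain \<mu> w where w: "w \<in> carrier_vec p" "w \<noteq> 0\<^sub>v p" "T *\<^sub>v w = \<mu> \<cdot>\<^sub>v w"
    using sym_eigen_vec[OF T p] sym unfolding T_def by auto
  define x where "x = (\<lambda>l. w $ l)"
  have Tx: "(\<Sum>j<p. t l j * x j) = \<mu> * x l" if "l < p" for l
  proof -
    have "(T *\<^sub>v w) $ l = (\<Sum>j<p. t l j * x j)"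
      using that T w(1) unfolding T_def x_def by (simp add: scalar_prod_def lessThan_atLeast0)
    then show ?thesis using w(3) that w(1) unfolding x_def by simp
  qed
  obtain i where i: "i < p" "w $ i \<noteq> 0" using w(1,2) by (metis carrier_vecD eq_vecI index_zero_vec)
  have pos: "ip p x x > 0"
  proof -
    have "ip p x x \<ge> x i * x i" unfolding ip_def using i by (intro member_le_sum) auto
    moreover have "x i * x i > 0" using i unfolding x_def by (metis not_real_square_gt_zero)
    ultimately show ?thesis by simp
  qed
  define z where "z = (\<lambda>l. (1 / sqrt (ip p x x)) * x l)"
  have "ip p z z = 1" unfolding z_def ip_scale_left ip_scale_right using pos
    by (simp add: field_simps)
  moreover have "\<forall>l<p. (\<Sum>j<p. t l j * z j) = \<mu> * z l"
  proof (intro allI impI)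
    fix l assume l: "l < p"
    have "(\<Sum>j<p. t l j * z j) = (1 / sqrt (ip p x x)) * (\<Sum>j<p. t l j * x j)"
      unfolding z_def by (simp add: sum_distrib_left mult_ac)
    then show "(\<Sum>j<p. t l j * z j) = \<mu> * z l" using Tx[OF l] unfolding z_def by simp
  qed
  ultimately show ?thesis by blast
qed

lemma sum_split_shift0:
  "(\<Sum>i<k+(n::nat). f i) = (\<Sum>i<k. f i) + (\<Sum>a<n. f (k+a))"
  by (induction n) (auto simp: add.assoc)

lemma sum_split_shift:
  assumes "k \<le> (m::nat)"
  shows "(\<Sum>i<m. f i) = (\<Sum>i<k. f i) + (\<Sum>a<m-k. f (k+a))"
proof -
  have m: "m = k + (m - k)" using assms by simp
  have "(\<Sum>i<m. f i) = (\<Sum>i<k + (m-k). f i)" using m by simp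
  also have "\<dots> = (\<Sum>i<k. f i) + (\<Sum>a<m-k. f (k+a))"
    by (rule sum_split_shift0)
  finally show ?thesis .
qed

lemma ip_T_sym:
  assumes sym: "\<And>i j. i < m \<Longrightarrow> j < m \<Longrightarrow> t i j = t j i"
  shows "ip m x (\<lambda>l. \<Sum>j<m. t l j * y j) = ip m y (\<lambda>l. \<Sum>j<m. t l j * x j)"
proof -
  have "ip m x (\<lambda>l. \<Sum>j<m. t l j * y j) = (\<Sum>l<m. \<Sum>j<m. x l * t l j * y j)"
    unfolding ip_def by (simp add: sum_distrib_left mult_ac)
  also have "\<dots> = (\<Sum>j<m. \<Sum>l<m. x l * t l j * y j)" by (rule sum.swap)
  also have "\<dots> = ip m y (\<lambda>l. \<Sum>j<m. t l j * x j)"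
    unfolding ip_def by (simp add: sum_distrib_left mult_ac sym)
  finally show ?thesis .
qed

lemma spectral_step:
  assumes sym: "\<And>i j. i < m \<Longrightarrow> j < m \<Longrightarrow> t i j = t j i"
    and km: "k < m"
    and orth: "orthon m {..<k} u"
    and eig: "\<forall>a<k. \<forall>l<m. (\<Sum>j<m. t l j * u a j) = lam a * u a l"
  shows "\<exists>x \<mu>. orthon m {..<Suc k} (u(k := x)) \<and> (\<forall>l<m. (\<Sum>j<m. t l j * x j) = \<mu> * x l)"
proof -
  obtain g where g: "orthon m {..<m} g" and gu: "\<forall>j\<in>{..<k}. g j = u j"
    using extend[of "{..<k}" m m u] orth km by auto
  define p where "p = m - k"
  have p: "0 < p" using km unfolding p_def by simp
  define tg where "tg i = (\<lambda>l. \<Sum>j<m. t l j * g i j)" for i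
  define t' where "t' a b = ip m (g (k+a)) (tg (k+b))" for a b
  have gg: "ip m (g i) (g j) = (if i = j then 1 else 0)" if "i < m" "j < m" for i j
    using g that unfolding orthon_def by auto
  have t'sym: "t' a b = t' b a" for a b
    unfolding t'_def tg_def by (rule ip_T_sym[OF sym])
  obtain \<mu> z where z: "ip p z z = 1" and tz: "\<forall>l<p. (\<Sum>j<p. t' l j * z j) = \<mu> * z l"
    using sym_eigen[OF p, of t'] t'sym by blast
  define x where "x = (\<lambda>l. \<Sum>b<p. z b * g (k+b) l)"
  have kb: "k + b < m" if "b < p" for b using that unfolding p_def by simp
  have low0: "ip m (g i) (tg (k+b)) = 0" if "i < k" "b < p" for i b
  proof -
    have "ip m (g i) (tg (k+b)) = ip m (g (k+b)) (tg i)"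
      unfolding tg_def by (rule ip_T_sym[OF sym])
    also have "\<dots> = ip m (g (k+b)) (\<lambda>l. lam i * g i l)"
      unfolding tg_def ip_def using eig gu that by (intro sum.cong refl) auto
    also have "ip m (g (k+b)) (\<lambda>l. lam i * g i l) = 0"
      unfolding ip_scale_right using gg[OF kb[OF that(2)], of i] that km by simp
    finally show ?thesis .
  qed
  have tgexp: "tg (k+b) l = (\<Sum>a<p. t' a b * g (k+a) l)" if "b < p" "l < m" for b l
  proof -
    have "tg (k+b) l = (\<Sum>i<m. ip m (g i) (tg (k+b)) * g i l)"
      using expand[OF g that(2)] by simp
    also have "\<dots> = (\<Sum>i<k. ip m (g i) (tg (k+b)) * g i l) + (\<Sum>a<p. ip m (g (k+a)) (tg (k+b)) * g (k+a) l)"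
      unfolding p_def by (rule sum_split_shift) (use km in simp)
    also have "(\<Sum>i<k. ip m (g i) (tg (k+b)) * g i l) = 0"
      using low0 that by simp
    finally show ?thesis unfolding t'_def by simp
  qed
  have Tx: "(\<Sum>j<m. t l j * x j) = \<mu> * x l" if l: "l < m" for l
  proof -
    have "(\<Sum>j<m. t l j * x j) = (\<Sum>b<p. z b * tg (k+b) l)"
      unfolding x_def tg_def by (simp add: sum_distrib_left mult_ac sum.swap[of _ "{..<m}"])
    also have "\<dots> = (\<Sum>b<p. \<Sum>a<p. z b * t' a b * g (k+a) l)"
      using tgexp l by (simp add: sum_distrib_left mult_ac)
    also have "\<dots> = (\<Sum>a<p. \<Sum>b<p. z b * t' a b * g (k+a) l)" by (rule sum.swap)
    also have "\<dots> = (\<Sum>a<p. (\<Sum>b<p. t' a b * z b) * g (k+a) l)"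
      by (intro sum.cong refl) (simp only: sum_distrib_right, simp add: mult_ac)
    also have "\<dots> = (\<Sum>a<p. \<mu> * z a * g (k+a) l)" using tz by simp
    also have "\<dots> = \<mu> * x l" unfolding x_def by (simp add: sum_distrib_left mult_ac)
    finally show ?thesis .
  qed
  have xg: "ip m x (g i) = 0" if "i < k" for i
  proof -
    have "ip m x (g i) = (\<Sum>b<p. z b * ip m (g (k+b)) (g i))"
      unfolding x_def ip_sum_left ..
    also have "\<dots> = 0" using gg kb that km by (intro sum.neutral) auto
    finally show ?thesis .
  qed
  have xx: "ip m x x = 1"
  proof -
    have "ip m x x = (\<Sum>a<p. z a * (\<Sum>b<p. z b * ip m (g (k+a)) (g (k+b))))"
      unfolding x_def ip_sum_left ip_sum_right ..
    also have "\<dots> = (\<Sum>a<p. z a * z a)"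
    proof (intro sum.cong refl)
      fix a assume a: "a \<in> {..<p}"
      have "(\<Sum>b<p. z b * ip m (g (k+a)) (g (k+b))) = (\<Sum>b<p. if b = a then z a else 0)"
        using gg kb a by (intro sum.cong refl) auto
      also have "\<dots> = z a" using a by simp
      finally show "z a * (\<Sum>b<p. z b * ip m (g (k+a)) (g (k+b))) = z a * z a" by simp
    qed
    finally show ?thesis using z unfolding ip_def by simp
  qed
  have "orthon m {..<Suc k} (u(k := x))"
    unfolding orthon_def
  proof (intro ballI)
    fix i j assume i: "i \<in> {..<Suc k}" and j: "j \<in> {..<Suc k}"
    show "ip m ((u(k := x)) i) ((u(k := x)) j) = (if i = j then 1 else 0)"
    proof (cases "i = k"; cases "j = k")
      assume "i = k" "j = k" then show ?thesis using xx by simp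
    next
      assume "i = k" "j \<noteq> k" then show ?thesis using xg[of j] gu j by auto
    next
      assume "i \<noteq> k" "j = k" then show ?thesis using xg[of i] gu i by (auto simp: ip_comm)
    next
      assume "i \<noteq> k" "j \<noteq> k" then show ?thesis using orth i j unfolding orthon_def by auto
    qed
  qed
  then show ?thesis using Tx by blast
qed

lemma spectral_aux:
  assumes sym: "\<And>i j. i < m \<Longrightarrow> j < m \<Longrightarrow> t i j = t j i"
  shows "k \<le> m \<Longrightarrow> \<exists>u lam. orthon m {..<k} u \<and> (\<forall>a<k. \<forall>l<m. (\<Sum>j<m. t l j * u a j) = lam a * u a l)"
proof (induction k)
  case 0
  then show ?case unfolding orthon_def by auto
next
  case (Suc k)
  then obtain u lam where u: "orthon m {..<k} u" "\<forall>a<k. \<forall>l<m. (\<Sum>j<m. t l j * u a j) = lam a * u a l"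
    by auto
  obtain x \<mu> where x: "orthon m {..<Suc k} (u(k := x))" "\<forall>l<m. (\<Sum>j<m. t l j * x j) = \<mu> * x l"
    using spectral_step[OF sym _ u] Suc(2) by (metis Suc_le_lessD)
  have "\<forall>a<Suc k. \<forall>l<m. (\<Sum>j<m. t l j * (u(k := x)) a j) = (lam(k := \<mu>)) a * (u(k := x)) a l"
    using x(2) u(2) by (auto simp: less_Suc_eq)
  then show ?case using x(1) by blast
qed

lemma spectral:
  assumes sym: "\<And>i j. i < m \<Longrightarrow> j < m \<Longrightarrow> t i j = t j i"
  shows "\<exists>u lam. orthon m {..<m} u \<and> (\<forall>a<m. \<forall>l<m. (\<Sum>j<m. t l j * u a j) = lam a * u a l)"
  using spectral_aux[OF sym, of m] by simp

lemma ip_zero_self: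
  assumes "ip n x x = 0" "i < n"
  shows "x i = 0"
proof -
  have "\<forall>l\<in>{..<n}. x l * x l = 0"
    using assms(1) unfolding ip_def by (subst sum_nonneg_eq_0_iff[symmetric]) auto
  then show ?thesis using assms(2) by auto
qed

lemma sqrt_ge_self: "0 \<le> (x::real) \<Longrightarrow> x \<le> 1 \<Longrightarrow> x \<le> sqrt x"
  by (metis real_sqrt_le_iff real_sqrt_pow2 power2_eq_square mult_left_le real_sqrt_ge_zero real_sqrt_one)

lemma polar:
  fixes M :: "nat \<Rightarrow> nat \<Rightarrow> real"
  assumes mn: "m \<le> n"
    and contr: "\<And>x. (\<Sum>i<n. (\<Sum>j<m. M i j * x j)\<^sup>2) \<le> ip m x x"
  shows "\<exists>V. (\<forall>j<m. \<forall>j'<m. (\<Sum>i<n. V i j * V i j') = (if j = j' then 1 else 0)) \<and>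
             (\<Sum>i<n. \<Sum>j<m. (M i j - V i j)\<^sup>2) \<le> real m - (\<Sum>i<n. \<Sum>j<m. (M i j)\<^sup>2)"
proof -
  define s where "s j j' = (\<Sum>i<n. M i j * M i j')" for j j'
  have ssym: "s j j' = s j' j" for j j' unfolding s_def by (simp add: mult.commute)
  obtain u D where u: "orthon m {..<m} u" and uD: "\<forall>a<m. \<forall>l<m. (\<Sum>j<m. s l j * u a j) = D a * u a l"
    using spectral[of m s] ssym by blast
  have uu: "ip m (u a) (u b) = (if a = b then 1 else 0)" if "a < m" "b < m" for a b
    using u that unfolding orthon_def by auto
  define nv where "nv a = (\<lambda>i. \<Sum>j<m. M i j * u a j)" for a
  have nn: "ip n (nv a) (nv b) = D b * (if a = b then 1 else 0)" if ab: "a < m" "b < m" for a b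
  proof -
    have "ip n (nv a) (nv b) = (\<Sum>i<n. \<Sum>j'<m. \<Sum>j<m. u a j * (M i j * M i j' * u b j'))"
      unfolding ip_def nv_def by (simp add: sum_distrib_left sum_distrib_right mult_ac)
    also have "\<dots> = (\<Sum>i<n. \<Sum>j<m. \<Sum>j'<m. u a j * (M i j * M i j' * u b j'))"
      by (intro sum.cong refl sum.swap)
    also have "\<dots> = (\<Sum>j<m. \<Sum>i<n. \<Sum>j'<m. u a j * (M i j * M i j' * u b j'))"
      by (rule sum.swap)
    also have "\<dots> = (\<Sum>j<m. \<Sum>j'<m. \<Sum>i<n. u a j * (M i j * M i j' * u b j'))"
      by (intro sum.cong refl sum.swap)
    also have "\<dots> = (\<Sum>j<m. u a j * (\<Sum>j'<m. s j j' * u b j'))"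
      unfolding s_def by (simp add: sum_distrib_left sum_distrib_right mult_ac)
    also have "\<dots> = (\<Sum>j<m. u a j * (D b * u b j))"
      using uD ab by simp
    also have "\<dots> = D b * ip m (u a) (u b)"
      unfolding ip_def by (simp add: sum_distrib_left mult_ac)
    finally show ?thesis using uu[OF ab] by simp
  qed
  have D0: "0 \<le> D a" if "a < m" for a using nn[OF that that] ip_nonneg[of n "nv a"] by simp
  have D1: "D a \<le> 1" if "a < m" for a
  proof -
    have "D a = (\<Sum>i<n. (\<Sum>j<m. M i j * u a j)\<^sup>2)"
      using nn[OF that that] unfolding ip_def nv_def by (simp add: power2_eq_square)
    also have "\<dots> \<le> ip m (u a) (u a)" by (rule contr)
    finally show ?thesis using uu[OF that that] by simp
  qed
  define J where "J = {a. a < m \<and> D a > 0}"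
  define f where "f a = (\<lambda>i. (1 / sqrt (D a)) * nv a i)" for a
  have orthJ: "orthon n J f"
    unfolding orthon_def
  proof (intro ballI)
    fix a b assume a: "a \<in> J" and b: "b \<in> J"
    show "ip n (f a) (f b) = (if a = b then 1 else 0)"
      unfolding f_def ip_scale_left ip_scale_right using nn[of a b] a b unfolding J_def
      by (auto simp: field_simps)
  qed
  obtain g where g: "orthon n {..<m} g" and gf: "\<forall>a\<in>J. g a = f a"
    using extend[of J m n f] orthJ mn unfolding J_def by auto
  have gg: "ip n (g a) (g b) = (if a = b then 1 else 0)" if "a < m" "b < m" for a b
    using g that unfolding orthon_def by auto
  have gn: "ip n (g a) (nv a) = sqrt (D a)" if a: "a < m" for a
  proof (cases "D a > 0")
    case True
    then have "g a = f a" using gf a unfolding J_def by auto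
    moreover have "ip n (f a) (nv a) = (1 / sqrt (D a)) * D a"
      unfolding f_def ip_scale_left using nn[OF a a] by simp
    ultimately have "ip n (g a) (nv a) = (1 / sqrt (D a)) * D a" by simp
    also have "\<dots> = sqrt (D a)" using True real_div_sqrt[of "D a"] by simp
    finally show ?thesis .
  next
    case False
    then have "D a = 0" using D0[OF a] by simp
    then have "ip n (nv a) (nv a) = 0" using nn[OF a a] by simp
    then have "\<forall>i<n. nv a i = 0" using ip_zero_self by blast
    then have "ip n (g a) (nv a) = 0" unfolding ip_def by simp
    then show ?thesis using \<open>D a = 0\<close> by simp
  qed
  define V where "V i j = (\<Sum>a<m. g a i * u a j)" for i j
  have VV: "(\<Sum>i<n. V i j * V i j') = (if j = j' then 1 else 0)" if jj: "j < m" "j' < m" for j j'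
  proof -
    have "(\<Sum>i<n. V i j * V i j') = (\<Sum>i<n. \<Sum>a<m. u a j * (g a i * (\<Sum>b<m. u b j' * g b i)))"
      unfolding V_def by (simp only: sum_distrib_right) (simp add: mult_ac)
    also have "\<dots> = (\<Sum>a<m. \<Sum>i<n. u a j * (g a i * (\<Sum>b<m. u b j' * g b i)))"
      by (rule sum.swap)
    also have "\<dots> = (\<Sum>a<m. u a j * ip n (g a) (\<lambda>i. \<Sum>b<m. u b j' * g b i))"
      unfolding ip_def by (simp add: sum_distrib_left)
    also have "\<dots> = (\<Sum>a<m. u a j * u a j')"
    proof (intro sum.cong refl)
      fix a assume a: "a \<in> {..<m}"
      have "ip n (g a) (\<lambda>i. \<Sum>b<m. u b j' * g b i) = (\<Sum>b<m. u b j' * ip n (g a) (g b))"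
        by (rule ip_sum_right)
      also have "\<dots> = u a j'" using orthon_sum2[OF g _ a, of "\<lambda>b. u b j'"] by simp
      finally show "u a j * ip n (g a) (\<lambda>i. \<Sum>b<m. u b j' * g b i) = u a j * u a j'" by simp
    qed
    also have "\<dots> = (if j = j' then 1 else 0)" by (rule complete_sq[OF u jj])
    finally show ?thesis .
  qed
  have sumVV: "(\<Sum>i<n. \<Sum>j<m. (V i j)\<^sup>2) = real m"
  proof -
    have "(\<Sum>i<n. \<Sum>j<m. (V i j)\<^sup>2) = (\<Sum>j<m. \<Sum>i<n. V i j * V i j)"
      by (subst sum.swap) (simp add: power2_eq_square)
    also have "\<dots> = (\<Sum>j<m. 1)" using VV by simp
    finally show ?thesis by simp
  qed
  have sumMV: "(\<Sum>i<n. \<Sum>j<m. M i j * V i j) = (\<Sum>a<m. sqrt (D a))"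
  proof -
    have row: "(\<Sum>j<m. M i j * V i j) = (\<Sum>a<m. g a i * nv a i)" for i
    proof -
      have "(\<Sum>j<m. M i j * V i j) = (\<Sum>j<m. \<Sum>a<m. M i j * (g a i * u a j))"
        unfolding V_def by (simp add: sum_distrib_left)
      also have "\<dots> = (\<Sum>a<m. \<Sum>j<m. M i j * (g a i * u a j))" by (rule sum.swap)
      also have "\<dots> = (\<Sum>a<m. g a i * nv a i)"
        unfolding nv_def by (simp add: sum_distrib_left mult_ac)
      finally show ?thesis .
    qed
    have "(\<Sum>i<n. \<Sum>j<m. M i j * V i j) = (\<Sum>i<n. \<Sum>a<m. g a i * nv a i)"
      using row by simp
    also have "\<dots> = (\<Sum>a<m. ip n (g a) (nv a))" unfolding ip_def by (rule sum.swap)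
    finally show ?thesis using gn by simp
  qed
  have sumD: "(\<Sum>a<m. D a) = (\<Sum>i<n. \<Sum>j<m. (M i j)\<^sup>2)"
  proof -
    have "(\<Sum>a<m. D a) = (\<Sum>a<m. \<Sum>i<n. (ip m (u a) (\<lambda>j. M i j))\<^sup>2)"
    proof (intro sum.cong refl)
      fix a assume a: "a \<in> {..<m}"
      have "D a = ip n (nv a) (nv a)" using nn a by simp
      also have "\<dots> = (\<Sum>i<n. (ip m (u a) (\<lambda>j. M i j))\<^sup>2)"
        unfolding ip_def nv_def by (simp add: power2_eq_square mult.commute)
      finally show "D a = (\<Sum>i<n. (ip m (u a) (\<lambda>j. M i j))\<^sup>2)" .
    qed
    also have "\<dots> = (\<Sum>i<n. \<Sum>a<m. (ip m (u a) (\<lambda>j. M i j))\<^sup>2)" by (rule sum.swap)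
    also have "\<dots> = (\<Sum>i<n. ip m (\<lambda>j. M i j) (\<lambda>j. M i j))" using parseval[OF u] by simp
    finally show ?thesis unfolding ip_def by (simp add: power2_eq_square)
  qed
  have sq: "(\<Sum>a<m. D a) \<le> (\<Sum>a<m. sqrt (D a))"
    using D0 D1 sqrt_ge_self by (intro sum_mono) auto
  have "(\<Sum>i<n. \<Sum>j<m. (M i j - V i j)\<^sup>2) =
      (\<Sum>i<n. \<Sum>j<m. (M i j)\<^sup>2) - 2 * (\<Sum>i<n. \<Sum>j<m. M i j * V i j) + (\<Sum>i<n. \<Sum>j<m. (V i j)\<^sup>2)"
    by (simp add: power2_diff sum.distrib sum_subtractf sum_distrib_left mult.assoc)
  also have "\<dots> \<le> real m - (\<Sum>i<n. \<Sum>j<m. (M i j)\<^sup>2)"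
    unfolding sumVV sumMV using sq sumD by linarith
  finally show ?thesis using VV by blast
qed

lemma fro_norm_sq: "(fro_norm X)\<^sup>2 = (\<Sum>i<dim_row X. \<Sum>j<dim_col X. (X $$ (i,j))\<^sup>2)"
  unfolding fro_norm_def by (intro real_sqrt_pow2 sum_nonneg) auto

lemma ip_cong: "(\<And>l. l < n \<Longrightarrow> x l = x' l) \<Longrightarrow> (\<And>l. l < n \<Longrightarrow> y l = y' l) \<Longrightarrow> ip n x y = ip n x' y'"
  unfolding ip_def by (intro sum.cong) auto

definition alpha :: "nat \<Rightarrow> (nat \<Rightarrow> real) \<Rightarrow> nat \<Rightarrow> nat \<Rightarrow> real" where
  "alpha r a i j = (if i < r \<and> j < r \<and> i = j then a i else 0)"

lemma alpha_sum:
  assumes "r \<le> d"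
  shows "(\<Sum>l<d. alpha r a l k * f l) = (if k < r then a k * f k else 0)"
proof (cases "k < r")
  case True
  have "(\<Sum>l<d. alpha r a l k * f l) = (\<Sum>l<d. if l = k then a k * f k else 0)"
    unfolding alpha_def using True by (intro sum.cong) auto
  also have "\<dots> = a k * f k" using True assms by simp
  finally show ?thesis using True by simp
next
  case False
  then show ?thesis unfolding alpha_def by simp
qed

lemma alpha_sum':
  assumes "r \<le> d"
  shows "(\<Sum>l<d. f l * alpha r a l k) = (if k < r then a k * f k else 0)"
  using alpha_sum[OF assms, of a k f] by (simp add: mult.commute)

lemma resid_entry:
  fixes A Q :: "real mat"
  assumes Q: "Q \<in> carrier_mat d K" and A: "A \<in> carrier_mat d K"
    and i: "i < d" and j: "j < K"
  shows "resid A Q $$ (i,j) = A $$ (i,j) - (\<Sum>k<K. Q $$ (i,k) * (\<Sum>l<d. A $$ (l,k) * Q $$ (l,j)))"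
  unfolding resid_def using Q A i j by (simp add: scalar_prod_def lessThan_atLeast0)

lemma claim12:
  fixes r K d :: nat and a :: "nat \<Rightarrow> real" and A Q :: "real mat"
  assumes r1: "1 \<le> r" and rK: "r \<le> K" and Kd: "K \<le> d"
    and mono: "\<forall>i j. i \<le> j \<and> j < r \<longrightarrow> a j \<le> a i"
    and apos: "a (r - 1) > 0"
    and Aent: "\<And>i j. i < d \<Longrightarrow> j < K \<Longrightarrow> A $$ (i,j) = alpha r a i j"
    and Ac: "A \<in> carrier_mat d K"
    and Qc: "Q \<in> carrier_mat d K"
    and qorth: "orthon d {..<K} (\<lambda>j i. Q $$ (i,j))"
  shows "(a (r - 1))\<^sup>2 * (\<Sum>i<r. \<Sum>b<K-r. (Q $$ (i, r+b))\<^sup>2) \<le> (\<Sum>i<d. \<Sum>j<K. (resid A Q $$ (i,j))\<^sup>2)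
    \<and> (a (r - 1))\<^sup>2 * (\<Sum>i<d-r. \<Sum>j<r. (Q $$ (r+i, j))\<^sup>2) \<le> (\<Sum>i<d. \<Sum>j<K. (resid A Q $$ (i,j))\<^sup>2)"
proof -
  define q where "q j = (\<lambda>i. Q $$ (i,j))" for j
  have qo: "orthon d {..<K} q" using qorth unfolding q_def .
  have qq: "ip d (q j) (q j') = (if j = j' then 1 else 0)" if "j < K" "j' < K" for j j'
    using qo that unfolding orthon_def by auto
  define ar where "ar = a (r - 1)"
  have ar: "ar > 0" using apos unfolding ar_def .
  have arj: "ar\<^sup>2 \<le> (a j)\<^sup>2" if "j < r" for j
  proof -
    have "ar \<le> a j" using mono that unfolding ar_def by auto
    then show ?thesis using ar by (intro power_mono) auto
  qed
  have rd: "r \<le> d" using rK Kd by simp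
  define c where "c k j = (if k < r then a k * Q $$ (k,j) else 0)" for k j
  define x where "x j = (\<lambda>l. alpha r a l j)" for j
  define y where "y j = (\<lambda>l. x j l + (\<Sum>k<K. (- c k j) * q k l))" for j
  define \<rho> where "\<rho> j = (\<Sum>j'<K. (Q $$ (j,j'))\<^sup>2)" for j
  define E where "E j' j = (if j < r then a j * Q $$ (j,j') else 0) - c j' j" for j' j
  have Rent: "resid A Q $$ (i,j) = y j i" if "i < d" "j < K" for i j
  proof -
    have "(\<Sum>l<d. A $$ (l,k) * Q $$ (l,j)) = c k j" if "k < K" for k
    proof -
      have "(\<Sum>l<d. A $$ (l,k) * Q $$ (l,j)) = (\<Sum>l<d. alpha r a l k * Q $$ (l,j))"
        using Aent that by (intro sum.cong) auto
      also have "\<dots> = c k j" unfolding c_def by (rule alpha_sum[OF rd])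
      finally show ?thesis .
    qed
    then show ?thesis
      unfolding resid_entry[OF Qc Ac that] y_def x_def q_def using Aent that
      by (simp add: sum_negf mult.commute)
  qed
  have FR: "(\<Sum>i<d. \<Sum>j<K. (resid A Q $$ (i,j))\<^sup>2) = (\<Sum>j<K. ip d (y j) (y j))"
  proof -
    have "(\<Sum>i<d. \<Sum>j<K. (resid A Q $$ (i,j))\<^sup>2) = (\<Sum>j<K. \<Sum>i<d. (resid A Q $$ (i,j))\<^sup>2)"
      by (rule sum.swap)
    also have "\<dots> = (\<Sum>j<K. ip d (y j) (y j))"
      unfolding ip_def using Rent by (intro sum.cong refl) (simp add: power2_eq_square)
    finally show ?thesis .
  qed
  have qx: "ip d (q j') (x j) = (if j < r then a j * Q $$ (j,j') else 0)" for j j'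
    unfolding ip_def q_def x_def by (rule alpha_sum'[OF rd])
  have xx: "ip d (x j) (x j) = (if j < r then a j * a j else 0)" for j
    unfolding ip_def x_def by (subst alpha_sum'[OF rd]) (simp add: alpha_def)
  have qy: "ip d (q j') (y j) = E j' j" if "j' < K" for j j'
  proof -
    have "ip d (q j') (y j) = ip d (q j') (x j) + (\<Sum>k<K. (- c k j) * ip d (q j') (q k))"
      unfolding y_def by (simp only: ip_add_right ip_sum_right)
    also have "(\<Sum>k<K. (- c k j) * ip d (q j') (q k)) = - c j' j"
      using orthon_sum2[OF qo _, of j' "\<lambda>k. - c k j"] that by simp
    finally show ?thesis unfolding qx E_def by simp
  qed
  have col: "ip d (y j) (y j) = (\<Sum>j'<K. (E j' j)\<^sup>2) + (if j < r then (a j)\<^sup>2 * (1 - \<rho> j) else 0)"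
    if j: "j < K" for j
  proof -
    have "ip d (y j) (y j) = (\<Sum>j'<K. (ip d (q j') (y j))\<^sup>2) + ip d (x j) (x j) - (\<Sum>j'<K. (ip d (q j') (x j))\<^sup>2)"
      unfolding y_def by (rule pyth[OF qo])
    also have "(\<Sum>j'<K. (ip d (q j') (y j))\<^sup>2) = (\<Sum>j'<K. (E j' j)\<^sup>2)"
      using qy by simp
    finally have h1: "ip d (y j) (y j) = (\<Sum>j'<K. (E j' j)\<^sup>2) + ip d (x j) (x j) - (\<Sum>j'<K. (ip d (q j') (x j))\<^sup>2)" .
    have h2: "ip d (x j) (x j) - (\<Sum>j'<K. (ip d (q j') (x j))\<^sup>2) = (if j < r then (a j)\<^sup>2 * (1 - \<rho> j) else 0)"
      unfolding xx qx \<rho>_def by (simp add: power2_eq_square sum_distrib_left right_diff_distrib mult_ac)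
    show ?thesis using h1 h2 by simp
  qed
  define T1 where "T1 = (\<Sum>j<K. \<Sum>j'<K. (E j' j)\<^sup>2)"
  define T2 where "T2 = (\<Sum>j<r. (a j)\<^sup>2 * (1 - \<rho> j))"
  have FRT: "(\<Sum>i<d. \<Sum>j<K. (resid A Q $$ (i,j))\<^sup>2) = T1 + T2"
  proof -
    have "(\<Sum>j<K. (if j < r then (a j)\<^sup>2 * (1 - \<rho> j) else 0)) = (\<Sum>j<r. (if j < r then (a j)\<^sup>2 * (1 - \<rho> j) else 0)) + (\<Sum>b<K-r. (if r + b < r then (a (r+b))\<^sup>2 * (1 - \<rho> (r+b)) else 0))"
      by (rule sum_split_shift[OF rK])
    also have "\<dots> = T2" unfolding T2_def by simp
    finally have "(\<Sum>j<K. (if j < r then (a j)\<^sup>2 * (1 - \<rho> j) else 0)) = T2" .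
    then show ?thesis unfolding FR T1_def using col by (simp add: sum.distrib)
  qed
  have \<rho>1: "\<rho> j \<le> 1" if "j < r" for j
  proof -
    have "(\<Sum>j'<K. (ip d (q j') (\<lambda>l. if l = j then 1 else 0))\<^sup>2) \<le> ip d (\<lambda>l. if l = j then 1 else 0) (\<lambda>l. if l = j then 1 else 0)"
      by (rule bessel[OF qo])
    moreover have "j < d" using that rd by simp
    ultimately show ?thesis unfolding \<rho>_def using ip_delta_right[of j d] by (simp add: q_def)
  qed
  have T2lb: "ar\<^sup>2 * (\<Sum>j<r. (1 - \<rho> j)) \<le> T2"
    unfolding T2_def sum_distrib_left
    using arj \<rho>1 by (intro sum_mono mult_right_mono) auto
  have T2nn: "0 \<le> (\<Sum>j<r. (1 - \<rho> j))" using \<rho>1 by (intro sum_nonneg) auto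
  define N2 where "N2 = (\<Sum>i<r. \<Sum>b<K-r. (Q $$ (i, r+b))\<^sup>2)"
  define N1 where "N1 = (\<Sum>i<r. \<Sum>j<r. (Q $$ (i, j))\<^sup>2)"
  define N3 where "N3 = (\<Sum>i<d-r. \<Sum>j<r. (Q $$ (r+i, j))\<^sup>2)"
  have T1lb: "ar\<^sup>2 * N2 \<le> T1"
  proof -
    have "T1 = (\<Sum>j<r. \<Sum>j'<K. (E j' j)\<^sup>2) + (\<Sum>b<K-r. \<Sum>j'<K. (E j' (r+b))\<^sup>2)"
      unfolding T1_def by (rule sum_split_shift[OF rK])
    also have "\<dots> \<ge> (\<Sum>b<K-r. \<Sum>j'<K. (E j' (r+b))\<^sup>2)"
      by (simp add: sum_nonneg)
    finally have 1: "(\<Sum>b<K-r. \<Sum>j'<K. (E j' (r+b))\<^sup>2) \<le> T1" .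
    have 2: "(\<Sum>j'<r. (E j' (r+b))\<^sup>2) \<le> (\<Sum>j'<K. (E j' (r+b))\<^sup>2)" for b
      using rK by (intro sum_mono2) auto
    have 3: "ar\<^sup>2 * (Q $$ (j', r+b))\<^sup>2 \<le> (E j' (r+b))\<^sup>2" if "j' < r" for j' b
    proof -
      have "(E j' (r+b))\<^sup>2 = (a j')\<^sup>2 * (Q $$ (j', r+b))\<^sup>2"
        unfolding E_def c_def using that by (simp add: power2_eq_square)
      then show ?thesis using arj[OF that] by (simp add: mult_right_mono)
    qed
    have "ar\<^sup>2 * N2 = (\<Sum>b<K-r. \<Sum>j'<r. ar\<^sup>2 * (Q $$ (j', r+b))\<^sup>2)"
      unfolding N2_def sum_distrib_left by (rule sum.swap)
    also have "\<dots> \<le> (\<Sum>b<K-r. \<Sum>j'<r. (E j' (r+b))\<^sup>2)"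
      using 3 by (intro sum_mono) auto
    also have "\<dots> \<le> (\<Sum>b<K-r. \<Sum>j'<K. (E j' (r+b))\<^sup>2)"
      using 2 by (intro sum_mono) auto
    finally show ?thesis using 1 by simp
  qed
  have colunit: "(\<Sum>i<d. (Q $$ (i,j))\<^sup>2) = 1" if "j < K" for j
    using qq[OF that that] unfolding ip_def q_def by (simp add: power2_eq_square)
  have N13: "N1 + N3 = r"
  proof -
    have "(\<Sum>j<r. \<Sum>i<d. (Q $$ (i,j))\<^sup>2) = (\<Sum>j<r. (1::real))"
      using colunit rK by (intro sum.cong refl) auto
    moreover have "(\<Sum>j<r. \<Sum>i<d. (Q $$ (i,j))\<^sup>2) = (\<Sum>j<r. (\<Sum>i<r. (Q $$ (i,j))\<^sup>2) + (\<Sum>i<d-r. (Q $$ (r+i,j))\<^sup>2))"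
      by (intro sum.cong refl) (rule sum_split_shift[OF rd])
    moreover have "\<dots> = N1 + N3"
    proof -
      have "N1 = (\<Sum>j<r. \<Sum>i<r. (Q $$ (i,j))\<^sup>2)" unfolding N1_def by (rule sum.swap)
      moreover have "N3 = (\<Sum>j<r. \<Sum>i<d-r. (Q $$ (r+i,j))\<^sup>2)" unfolding N3_def by (rule sum.swap)
      ultimately show ?thesis by (simp only: sum.distrib)
    qed
    ultimately show ?thesis by simp
  qed
  have \<rho>sum: "(\<Sum>j<r. \<rho> j) = N1 + N2"
  proof -
    have "(\<Sum>j<r. \<rho> j) = (\<Sum>j<r. (\<Sum>j'<r. (Q $$ (j,j'))\<^sup>2) + (\<Sum>b<K-r. (Q $$ (j,r+b))\<^sup>2))"
      unfolding \<rho>_def by (intro sum.cong refl) (rule sum_split_shift[OF rK])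
    then show ?thesis unfolding N1_def N2_def sum.distrib by simp
  qed
  have c1: "ar\<^sup>2 * N2 \<le> T1 + T2" using T1lb T2lb T2nn ar
    by (smt (verit) mult_nonneg_nonneg zero_le_power2)
  have c2: "ar\<^sup>2 * N3 \<le> T1 + T2"
  proof -
    have "(\<Sum>j<r. (1 - \<rho> j)) = real r - (N1 + N2)" using \<rho>sum by (simp add: sum_subtractf)
    then have "N3 = N2 + (\<Sum>j<r. (1 - \<rho> j))" using N13 by simp
    then have "ar\<^sup>2 * N3 = ar\<^sup>2 * N2 + ar\<^sup>2 * (\<Sum>j<r. (1 - \<rho> j))" by (simp add: distrib_left)
    then show ?thesis using T1lb T2lb by simp
  qed
  show ?thesis using c1 c2 unfolding FRT ar_def N2_def N3_def by simp
qed

lemma claim3: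
  fixes Q :: "real mat"
  assumes rK: "r \<le> K" and Kd: "K \<le> d"
    and qorth: "orthon d {..<K} (\<lambda>j i. Q $$ (i,j))"
  shows "\<exists>V. (\<forall>j<K-r. \<forall>j'<K-r. (\<Sum>i<d-r. V i j * V i j') = (if j = j' then 1 else 0)) \<and>
     (\<Sum>i<d-r. \<Sum>j<K-r. (Q $$ (r+i, r+j) - V i j)\<^sup>2) \<le> (\<Sum>i<r. \<Sum>b<K-r. (Q $$ (i, r+b))\<^sup>2)"
proof -
  define q where "q j = (\<lambda>i. Q $$ (i,j))" for j
  have qo: "orthon d {..<K} q" using qorth unfolding q_def .
  define n where "n = d - r"
  define m where "m = K - r"
  have rd: "r \<le> d" using rK Kd by simp
  have mn: "m \<le> n" unfolding m_def n_def using Kd by simp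
  define M where "M i j = Q $$ (r+i, r+j)" for i j
  have qo': "orthon d {..<m} (\<lambda>j. q (r+j))"
    using qo unfolding orthon_def m_def by auto
  have contr: "(\<Sum>i<n. (\<Sum>j<m. M i j * x j)\<^sup>2) \<le> ip m x x" for x
  proof -
    define w where "w = (\<lambda>l. \<Sum>j<m. x j * q (r+j) l)"
    have "ip d w w = (\<Sum>j<m. x j * (\<Sum>j'<m. x j' * ip d (q (r+j)) (q (r+j'))))"
      unfolding w_def ip_sum_left ip_sum_right ..
    also have "\<dots> = (\<Sum>j<m. x j * x j)"
      using orthon_sum2[OF qo'] by simp
    finally have ww: "ip d w w = ip m x x" unfolding ip_def .
    have "ip d w w = (\<Sum>l<r. w l * w l) + (\<Sum>a<n. w (r+a) * w (r+a))"
      unfolding ip_def n_def by (rule sum_split_shift[OF rd])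
    moreover have "(\<Sum>l<r. w l * w l) \<ge> 0" by (intro sum_nonneg) auto
    moreover have "(\<Sum>a<n. w (r+a) * w (r+a)) = (\<Sum>i<n. (\<Sum>j<m. M i j * x j)\<^sup>2)"
      unfolding w_def M_def q_def by (simp add: power2_eq_square mult.commute)
    ultimately show ?thesis using ww by linarith
  qed
  obtain V where VV: "\<forall>j<m. \<forall>j'<m. (\<Sum>i<n. V i j * V i j') = (if j = j' then 1 else 0)"
    and Vb: "(\<Sum>i<n. \<Sum>j<m. (M i j - V i j)\<^sup>2) \<le> real m - (\<Sum>i<n. \<Sum>j<m. (M i j)\<^sup>2)"
    using polar[OF mn contr] by blast
  have colunit: "(\<Sum>i<r. (Q $$ (i, r+j))\<^sup>2) + (\<Sum>a<n. (M a j)\<^sup>2) = 1" if "j < m" for j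
  proof -
    have "(\<Sum>i<d. (Q $$ (i, r+j))\<^sup>2) = 1"
      using qo that unfolding orthon_def ip_def q_def m_def by (auto simp: power2_eq_square)
    moreover have "(\<Sum>i<d. (Q $$ (i, r+j))\<^sup>2) = (\<Sum>i<r. (Q $$ (i, r+j))\<^sup>2) + (\<Sum>a<n. (M a j)\<^sup>2)"
      unfolding M_def n_def by (rule sum_split_shift[OF rd])
    ultimately show ?thesis by simp
  qed
  have "real m = (\<Sum>j<m. (\<Sum>i<r. (Q $$ (i, r+j))\<^sup>2) + (\<Sum>a<n. (M a j)\<^sup>2))"
    using colunit by simp
  also have "\<dots> = (\<Sum>i<r. \<Sum>b<m. (Q $$ (i, r+b))\<^sup>2) + (\<Sum>i<n. \<Sum>j<m. (M i j)\<^sup>2)"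
    by (simp add: sum.distrib sum.swap[of _ "{..<m}" "{..<r}"] sum.swap[of _ "{..<m}" "{..<n}"])
  finally have "real m - (\<Sum>i<n. \<Sum>j<m. (M i j)\<^sup>2) = (\<Sum>i<r. \<Sum>b<m. (Q $$ (i, r+b))\<^sup>2)" by simp
  then have Vb': "(\<Sum>i<n. \<Sum>j<m. (M i j - V i j)\<^sup>2) \<le> (\<Sum>i<r. \<Sum>b<m. (Q $$ (i, r+b))\<^sup>2)"
    using Vb by linarith
  show ?thesis using VV Vb' unfolding M_def m_def n_def by blast
qed

theorem proposition4:
  fixes r K d :: nat and a :: "nat \<Rightarrow> real" and A Q Q1 Q2 Q3 Q4 :: "real mat"
  assumes "1 \<le> r" and "r \<le> K" and "K \<le> d"
    and "\<forall>i j. i \<le> j \<and> j < r \<longrightarrow> a j \<le> a i"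
    and "a (r - 1) > 0"
    and "A = four_block_mat (mat r r (\<lambda>(i,j). if i = j then a i else 0))
               (0\<^sub>m r (K - r)) (0\<^sub>m (d - r) r) (0\<^sub>m (d - r) (K - r))"
    and "Q \<in> stiefel d K"
    and "split_block Q r r = (Q1, Q2, Q3, Q4)"
  shows "(a (r - 1))\<^sup>2 * (fro_norm Q2)\<^sup>2 \<le> (fro_norm (resid A Q))\<^sup>2
     \<and> (a (r - 1))\<^sup>2 * (fro_norm Q3)\<^sup>2 \<le> (fro_norm (resid A Q))\<^sup>2
     \<and> (INF V \<in> stiefel (d - r) (K - r). (fro_norm (Q4 - V))\<^sup>2) \<le> (fro_norm Q2)\<^sup>2"
proof -
  have rd: "r \<le> d" using assms(2,3) by simp
  have Qc: "Q \<in> carrier_mat d K" and QtQ: "transpose_mat Q * Q = 1\<^sub>m K"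
    using assms(7) unfolding stiefel_def by auto
  have qorth: "orthon d {..<K} (\<lambda>j i. Q $$ (i,j))"
    unfolding orthon_def
  proof (intro ballI)
    fix j j' assume j: "j \<in> {..<K}" and j': "j' \<in> {..<K}"
    have "(transpose_mat Q * Q) $$ (j,j') = ip d (\<lambda>i. Q $$ (i,j)) (\<lambda>i. Q $$ (i,j'))"
      using Qc j j' unfolding ip_def by (simp add: scalar_prod_def lessThan_atLeast0)
    then show "ip d (\<lambda>i. Q $$ (i,j)) (\<lambda>i. Q $$ (i,j')) = (if j = j' then 1 else 0)"
      using QtQ j j' by simp
  qed
  have Ac: "A \<in> carrier_mat d K" using assms(6) rd assms(2) by auto
  have Aent: "A $$ (i,j) = alpha r a i j" if "i < d" "j < K" for i j
    using assms(6) rd assms(2) that unfolding alpha_def by auto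
  have Q2: "Q2 = mat r (K - r) (\<lambda>(i,j). Q $$ (i, j + r))"
    and Q3: "Q3 = mat (d - r) r (\<lambda>(i,j). Q $$ (i + r, j))"
    and Q4: "Q4 = mat (d - r) (K - r) (\<lambda>(i,j). Q $$ (i + r, j + r))"
    using assms(8) Qc unfolding split_block_def Let_def by auto
  have N2: "(fro_norm Q2)\<^sup>2 = (\<Sum>i<r. \<Sum>b<K-r. (Q $$ (i, r+b))\<^sup>2)"
    unfolding fro_norm_sq Q2 by (simp add: add.commute)
  have N3: "(fro_norm Q3)\<^sup>2 = (\<Sum>i<d-r. \<Sum>j<r. (Q $$ (r+i, j))\<^sup>2)"
    unfolding fro_norm_sq Q3 by (simp add: add.commute)
  have NR: "(fro_norm (resid A Q))\<^sup>2 = (\<Sum>i<d. \<Sum>j<K. (resid A Q $$ (i,j))\<^sup>2)"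
    unfolding fro_norm_sq using Qc Ac by (simp add: resid_def)
  note c12 = claim12[OF assms(1,2,3,4,5) Aent Ac Qc qorth]
  obtain V where VV: "\<forall>j<K-r. \<forall>j'<K-r. (\<Sum>i<d-r. V i j * V i j') = (if j = j' then 1 else 0)"
    and Vb: "(\<Sum>i<d-r. \<Sum>j<K-r. (Q $$ (r+i, r+j) - V i j)\<^sup>2) \<le> (\<Sum>i<r. \<Sum>b<K-r. (Q $$ (i, r+b))\<^sup>2)"
    using claim3[OF assms(2,3) qorth] by blast
  define Vm where "Vm = mat (d - r) (K - r) (\<lambda>(i,j). V i j)"
  have Vst: "Vm \<in> stiefel (d - r) (K - r)"
    unfolding stiefel_def
  proof (intro CollectI conjI)
    show "Vm \<in> carrier_mat (d - r) (K - r)" unfolding Vm_def by simp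
    show "transpose_mat Vm * Vm = 1\<^sub>m (K - r)"
    proof (rule eq_matI)
      fix j j' assume jj: "j < dim_row (1\<^sub>m (K - r))" "j' < dim_col (1\<^sub>m (K - r))"
      have "(transpose_mat Vm * Vm) $$ (j,j') = (\<Sum>i<d-r. V i j * V i j')"
        using jj unfolding Vm_def by (simp add: scalar_prod_def lessThan_atLeast0)
      then show "(transpose_mat Vm * Vm) $$ (j,j') = 1\<^sub>m (K - r) $$ (j,j')"
        using VV jj by simp
    qed (auto simp: Vm_def)
  qed
  have "(fro_norm (Q4 - Vm))\<^sup>2 = (\<Sum>i<d-r. \<Sum>j<K-r. (Q $$ (r+i, r+j) - V i j)\<^sup>2)"
    unfolding fro_norm_sq Q4 Vm_def by (simp add: add.commute)
  then have c3: "(fro_norm (Q4 - Vm))\<^sup>2 \<le> (fro_norm Q2)\<^sup>2" using Vb N2 by simp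
  have "(INF V \<in> stiefel (d - r) (K - r). (fro_norm (Q4 - V))\<^sup>2) \<le> (fro_norm (Q4 - Vm))\<^sup>2"
    by (rule cINF_lower[OF bdd_belowI2[of _ 0] Vst]) simp
  then show ?thesis using c12 c3 N2 N3 NR by simp
qed

end
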